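(* Let $\Delta_{\mathrm{MSE}}(\epsilon,B)$ be a real function of noise strength $\epsilon>0$ and shot budget $B>0$, and suppose that in a neighborhood of $\epsilon=0$ \[ \Delta_{\mathrm{MSE}}(\epsilon,B)=D_p\epsilon^{2p}-\frac{K_q\epsilon^q}{B}+R_p(\epsilon,B), \] with $D_p>0$, $K_q>0$, $p\ge1$, $q\ge0$, where the remainder satisfies $R_p(\epsilon,B)=O(\epsilon^{2p+\delta_b})+O(\epsilon^{q+\delta_v}/B)$ for some $\delta_b,\delta_v>0$ (uniformly in $B$), and, in case (i) below, with $r=1/(2p-q)$, the rescaled remainder $\eta_B(x)=B^{2pr}R_p(xB^{-r},B)$ and its $x$-derivative converge to $0$ uniformly on compact subsets of $(0,\infty)$ as $B\to\infty$. (i) If $0\le q<2p$, let $C_{p,q}=(K_q/D_p)^{1/(2p-q)}$. Then for any fixed $0<m<C_{p,q}<M<\infty$ and all sufficiently large $B$ there is a unique sign-changing local crossing $\epsilon^*_{\mathrm{loc}}(B)$ of $\Delta_{\mathrm{MSE}}(\cdot,B)$ in the window $\{xB^{-1/(2p-q)}:x\in[m,M]\}$, and \[ \frac{\epsilon^*_{\mathrm{loc}}(B)}{C_{p,q}B^{-1/(2p-q)}}\to1\qquad(B\to\infty). \] Moreover, for $\epsilon=xB^{-1/(2p-q)}$ with $x$ ranging in any compact subset of $(0,\infty)$ not containing $C_{p,q}$, for all sufficiently large $B$ one has $\Delta_{\mathrm{MSE}}(\epsilon,B)<0$ when $x<C_{p,q}$ and $\Delta_{\mathrm{MSE}}(\epsilon,B)>0$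 when $x>C_{p,q}$. If the convergence of $\eta_B$ and $\eta_B'$ holds at rate $O(B^{-\eta})$, then \[ \epsilon^*_{\mathrm{loc}}(B)=C_{p,q}B^{-1/(2p-q)}\left[1+O(B^{-\eta})\right]. \] (ii) If $q=2p$, then $\Delta_{\mathrm{MSE}}(\epsilon,B)=(D_p-K_q/B)\epsilon^{2p}+o(\epsilon^{2p})$, so no lower boundary $\epsilon^*(B)\to0$ arises from the leading balance; with $B^*=K_q/D_p$, for $B>B^*$ one has $\Delta_{\mathrm{MSE}}(\epsilon,B)>0$ for all sufficiently small $\epsilon>0$, and for $B<B^*$ one has $\Delta_{\mathrm{MSE}}(\epsilon,B)<0$ for all sufficiently small $\epsilon>0$ (the case $B=B^*$ being decided by higher-order terms). (iii) If $q>2p$, then for each sufficiently large fixed $B$, $\Delta_{\mathrm{MSE}}(\epsilon,B)>0$ for all sufficiently small $\epsilon>0$ (unless higher-order terms outside the displayed leading balance change the sign); in particular no leading-order shrinking lower boundary arises.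
   Context: In the application, $\Delta_{\mathrm{MSE}}(\epsilon,B)=\mathrm{MSE}_{\mathrm{noisy}}(\epsilon,B)-\mathrm{MSE}_{\mathrm{ZNE}}(\epsilon,B)$, the difference of mean-squared errors $\mathbb E[(\widehat\mu-\mu_0)^2]$ (about the ideal value $\mu_0$) of an unmitigated estimator and a zero-noise-extrapolation estimator, each using total shot budget $B$ at physical noise strength $\epsilon$; $\Delta_{\mathrm{MSE}}>0$ means ZNE helps. $D_p\epsilon^{2p}$ is the leading squared-bias improvement and $K_q\epsilon^q/B$ the leading excess-variance penalty. A "sign-changing local crossing" is a zero of $\Delta_{\mathrm{MSE}}(\cdot,B)$ across which it changes sign. *)

theory Defs
  imports Complex_Main "HOL-Library.Landau_Symbols"
begin

definition sign_changing_crossing :: "(real \<Rightarrow> real) \<Rightarrow> real \<Rightarrow> bool" where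
  "sign_changing_crossing f z \<longleftrightarrow> f z = 0 \<and>
     (\<exists>\<delta>>0. ((\<forall>t. z - \<delta> < t \<and> t < z \<longrightarrow> f t < 0) \<and> (\<forall>t. z < t \<and> t < z + \<delta> \<longrightarrow> f t > 0))
          \<or> ((\<forall>t. z - \<delta> < t \<and> t < z \<longrightarrow> f t > 0) \<and> (\<forall>t. z < t \<and> t < z + \<delta> \<longrightarrow> f t < 0)))"

definition rescaled_rem :: "(real \<Rightarrow> real \<Rightarrow> real) \<Rightarrow> real \<Rightarrow> real \<Rightarrow> real \<Rightarrow> real \<Rightarrow> real" where
  "rescaled_rem R p q B x = B powr (2 * p / (2 * p - q)) * R (x * B powr (- 1 / (2 * p - q))) B"

end

theory Submission
  imports Defs "HOL-Analysis.Analysis"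
begin

lemma powr_smallo_at0:
  fixes s t :: real assumes "s < t"
  shows "(\<lambda>e::real. e powr t) \<in> o[at_right 0](\<lambda>e. e powr s)"
proof (rule smalloI_tendsto)
  have "((\<lambda>e::real. e powr (t - s)) \<longlongrightarrow> 0) (at_right 0)"
    using assms by (intro tendsto_zero_powrI) (auto intro!: tendsto_intros eventually_mono[OF eventually_at_right_less])
  moreover have "\<forall>\<^sub>F e in at_right 0. e powr (t - s) = e powr t / e powr s"
    by (rule eventually_mono[OF eventually_at_right_less]) (simp add: powr_diff)
  ultimately show "((\<lambda>e::real. e powr t / e powr s) \<longlongrightarrow> 0) (at_right 0)"
    using tendsto_cong by fastforce
  show "\<forall>\<^sub>F e in at_right 0. (e::real) powr s \<noteq> 0"
    by (rule eventually_mono[OF eventually_at_right_less]) simp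
qed

lemma sign_pos_from_smallo:
  fixes f g :: "'a \<Rightarrow> real"
  assumes "(\<lambda>x. f x - L * g x) \<in> o[F](g)" "L > 0" "eventually (\<lambda>x. g x > 0) F"
  shows "eventually (\<lambda>x. f x > 0) F"
proof -
  have "L/2 > 0" using assms by simp
  from landau_o.smallD[OF assms(1) this] assms(3)
  show ?thesis
  proof eventually_elim
    case (elim x)
    then have "\<bar>f x - L * g x\<bar> \<le> L/2 * g x" by simp
    moreover have "0 < L * g x" using elim assms(2) by simp
    moreover have "L/2 * g x = (L * g x) / 2" by simp
    ultimately show ?case by linarith
  qed
qed

lemma sign_neg_from_smallo:
  fixes f g :: "'a \<Rightarrow> real"
  assumes "(\<lambda>x. f x - L * g x) \<in> o[F](g)" "L < 0" "eventually (\<lambda>x. g x > 0) F"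
  shows "eventually (\<lambda>x. f x < 0) F"
proof -
  have "- L/2 > 0" using assms by simp
  from landau_o.smallD[OF assms(1) this] assms(3)
  show ?thesis
  proof eventually_elim
    case (elim x)
    then have "\<bar>f x - L * g x\<bar> \<le> - L/2 * g x" by simp
    moreover have "0 < - L * g x" using elim assms(2) by (simp add: mult_neg_pos)
    moreover have "- L/2 * g x = - (L * g x) / 2" by simp
    ultimately show ?case by linarith
  qed
qed

lemma rem_smallo:
  fixes R :: "real \<Rightarrow> real \<Rightarrow> real" and B p q db dv :: real
  assumes "B > 0" "q \<ge> 2 * p" "db > 0" "dv > 0"
    and rem_bound: "\<exists>c \<epsilon>1. \<epsilon>1 > 0 \<and> (\<forall>\<epsilon> B. 0 < \<epsilon> \<and> \<epsilon> < \<epsilon>1 \<and> B > 0 \<longrightarrow>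
              \<bar>R \<epsilon> B\<bar> \<le> c * (\<epsilon> powr (2 * p + db) + \<epsilon> powr (q + dv) / B))"
  shows "(\<lambda>e. R e B) \<in> o[at_right 0](\<lambda>e. e powr (2 * p))"
proof -
  obtain c e1 where e1: "e1 > 0" and cb: "\<And>e. 0 < e \<Longrightarrow> e < e1 \<Longrightarrow>
      \<bar>R e B\<bar> \<le> c * (e powr (2 * p + db) + e powr (q + dv) / B)"
    using rem_bound assms(1) by blast
  have "(\<lambda>e. R e B) \<in> O[at_right 0](\<lambda>e. e powr (2 * p + db) + e powr (q + dv) / B)"
  proof (rule bigoI[where c = "\<bar>c\<bar>"])
    show "\<forall>\<^sub>F e in at_right 0. norm (R e B) \<le> \<bar>c\<bar> * norm (e powr (2 * p + db) + e powr (q + dv) / B)"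
      unfolding eventually_at_right_field
    proof (intro exI[of _ e1] conjI allI impI)
      fix e :: real assume "e > 0" "e < e1"
      then have "\<bar>R e B\<bar> \<le> c * (e powr (2 * p + db) + e powr (q + dv) / B)" by (rule cb)
      also have "\<dots> \<le> \<bar>c\<bar> * \<bar>e powr (2 * p + db) + e powr (q + dv) / B\<bar>"
        by (rule order_trans[OF abs_ge_self]) (simp add: abs_mult)
      finally show "norm (R e B) \<le> \<bar>c\<bar> * norm (e powr (2 * p + db) + e powr (q + dv) / B)" by simp
    qed (use e1 in auto)
  qed
  moreover have "(\<lambda>e. e powr (2 * p + db) + e powr (q + dv) / B) \<in> o[at_right 0](\<lambda>e. e powr (2 * p))"
  proof (rule sum_in_smallo)
    show "(\<lambda>e. e powr (2 * p + db)) \<in> o[at_right 0](\<lambda>e. e powr (2 * p))"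
      using assms by (intro powr_smallo_at0) simp
    show "(\<lambda>e. e powr (q + dv) / B) \<in> o[at_right 0](\<lambda>e. e powr (2 * p))"
      using assms by (simp add: powr_smallo_at0)
  qed
  ultimately show ?thesis by (rule landau_o.big_small_trans)
qed

lemma rescale_eq:
  fixes Delta R :: "real\<Rightarrow>real\<Rightarrow>real" and D K p q e0 B x :: real
  assumes "q < 2*p" "B>0" "x>0" "x * B powr (-(1/(2*p-q))) < e0"
   and exp: "\<forall>\<epsilon> B. 0<\<epsilon> \<and> \<epsilon><e0 \<and> B>0 \<longrightarrow> Delta \<epsilon> B = D*\<epsilon> powr (2*p) - K*\<epsilon> powr q / B + R \<epsilon> B"
  shows "Delta (x * B powr (-(1/(2*p-q)))) B = B powr (-(2*p/(2*p-q))) * (D * x powr (2*p) - K * x powr q + rescaled_rem R p q B x)"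
proof -
  define d where "d = 2*p - q"
  have d: "d > 0" using assms by (simp add: d_def)
  define e where "e = x * B powr (-(1/d))"
  have e: "e > 0" "e < e0" using assms by (auto simp: e_def d_def)
  have 1: "Delta e B = D*e powr (2*p) - K*e powr q / B + R e B" using exp e assms by blast
  have 2: "e powr (2*p) = x powr (2*p) * B powr (-(2*p/d))"
    using assms by (simp add: e_def powr_mult powr_powr)
  have 3: "e powr q / B = x powr q * B powr (-(2*p/d))"
  proof -
    have "e powr q / B = x powr q * (B powr (-(q/d)) / B)"
      using assms by (simp add: e_def powr_mult powr_powr)
    also have "B powr (-(q/d)) / B = B powr (-(q/d) - 1)"
      using assms by (simp add: powr_diff)
    also have "-(q/d) - 1 = -(2*p/d)" using d by (simp add: d_def field_simps)
    finally show ?thesis .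
  qed
  have 4: "rescaled_rem R p q B x = B powr (2*p/d) * R e B"
    by (simp add: rescaled_rem_def e_def d_def)
  have 5: "B powr (-(2*p/d)) * B powr (2*p/d) = 1"
    using assms by (simp add: powr_minus)
  have "Delta e B = D * e powr (2*p) - K * (e powr q / B) + R e B" using 1 by simp
  also have "\<dots> = D * (x powr (2*p) * B powr (-(2*p/d))) - K * (x powr q * B powr (-(2*p/d))) + R e B"
    unfolding 2 3 ..
  also have "\<dots> = B powr (-(2*p/d)) * (D * x powr (2*p) - K * x powr q) + (B powr (-(2*p/d)) * B powr (2*p/d)) * R e B"
    unfolding 5 by (simp add: algebra_simps)
  also have "\<dots> = B powr (-(2*p/d)) * (D * x powr (2*p) - K * x powr q + rescaled_rem R p q B x)"
    by (simp add: 4 algebra_simps)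
  finally show ?thesis by (simp add: e_def d_def)
qed

lemma case_i:
  fixes Delta R deta :: "real \<Rightarrow> real \<Rightarrow> real" and D K p q e0 :: real
  assumes D: "D>0" and K: "K>0" and q0: "q\<ge>0" and qp: "q<2*p" and e0: "e0>0"
   and exp: "\<forall>\<epsilon> B. 0<\<epsilon> \<and> \<epsilon><e0 \<and> B>0 \<longrightarrow> Delta \<epsilon> B = D*\<epsilon> powr (2*p) - K*\<epsilon> powr q / B + R \<epsilon> B"
   and hyp: "\<forall>S. compact S \<and> S \<subseteq> {0<..} \<longrightarrow> (\<forall>e>0. \<forall>\<^sub>F B in at_top. \<forall>x\<in>S.
          ((rescaled_rem R p q B) has_real_derivative deta B x) (at x) \<and>
          \<bar>rescaled_rem R p q B x\<bar> < e \<and> \<bar>deta B x\<bar> < e)"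
  shows "let C = (K / D) powr (1 / (2 * p - q)); r = 1 / (2 * p - q) in
       (\<exists>eps_loc :: real \<Rightarrow> real.
          (\<forall>m M. 0 < m \<and> m < C \<and> C < M \<longrightarrow>
             (\<forall>\<^sub>F B in at_top.
                eps_loc B \<in> {m * B powr (- r) .. M * B powr (- r)} \<and>
                sign_changing_crossing (\<lambda>\<epsilon>. Delta \<epsilon> B) (eps_loc B) \<and>
                (\<forall>\<epsilon>\<in>{m * B powr (- r) .. M * B powr (- r)}.
                   sign_changing_crossing (\<lambda>t. Delta t B) \<epsilon> \<longrightarrow> \<epsilon> = eps_loc B))) \<and>
          ((\<lambda>B. eps_loc B / (C * B powr (- r))) \<longlongrightarrow> 1) at_top \<and>
          (\<forall>\<eta>>0. (\<forall>S. compact S \<and> S \<subseteq> {0<..} \<longrightarrow> (\<exists>A. \<forall>\<^sub>F B in at_top. \<forall>x\<in>S.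
                     \<bar>rescaled_rem R p q B x\<bar> \<le> A * B powr (- \<eta>) \<and> \<bar>deta B x\<bar> \<le> A * B powr (- \<eta>)))
                 \<longrightarrow> (\<lambda>B. eps_loc B / (C * B powr (- r)) - 1) \<in> O[at_top](\<lambda>B. B powr (- \<eta>)))) \<and>
       (\<forall>S. compact S \<and> S \<subseteq> {0<..} \<and> C \<notin> S \<longrightarrow>
          (\<forall>\<^sub>F B in at_top. \<forall>x\<in>S.
             (x < C \<longrightarrow> Delta (x * B powr (- r)) B < 0) \<and>
             (x > C \<longrightarrow> Delta (x * B powr (- r)) B > 0)))"
proof -
  define d where "d = 2*p - q"
  have d: "d > 0" using qp by (simp add: d_def)
  define r where "r = 1/(2*p-q)"
  have r: "r > 0" using d by (simp add: r_def d_def)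
  define C where "C = (K/D) powr (1/(2*p-q))"
  define g where "g x = D * x powr (2*p) - K * x powr q" for x
  define g' where "g' x = D*(2*p)*x powr(2*p-1) - K*(q*x powr(q-1))" for x
  define eta where "eta B = rescaled_rem R p q B" for B
  define h where "h B x = g x + eta B x" for B x
  define E where "E = 2*p/d"
  have C: "C > 0" using D K by (simp add: C_def)
  have Cd: "C powr d = K/D" using D K d by (simp add: C_def d_def powr_powr)
  have gfac: "g x = x powr q * (D * x powr d - K)" if "x>0" for x
  proof -
    have "x powr (2*p) = x powr q * x powr d" by (simp add: d_def flip: powr_add)
    then show ?thesis by (simp add: g_def algebra_simps)
  qed
  have g_neg: "g x < 0" if "0<x" "x<C" for x
  proof -
    have "x powr d < C powr d" using that d by (intro powr_less_mono2) auto
    then have "D * x powr d < K" using Cd D by (simp add: field_simps)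
    then show ?thesis using that gfac by (simp add: mult_pos_neg)
  qed
  have g_pos: "g x > 0" if "x>C" for x
  proof -
    have "C powr d < x powr d" using that d C by (intro powr_less_mono2) auto
    then have "D * x powr d > K" using Cd D by (simp add: field_simps)
    then show ?thesis using that gfac C by simp
  qed
  have gC: "g C = 0" using gfac[OF C] Cd D by simp
  have g_deriv: "(g has_real_derivative g' x) (at x)" if "x>0" for x
    unfolding g_def g'_def using that by (auto intro!: derivative_eq_intros)
  have g'C: "g' C > 0"
  proof -
    have "C powr (2*p-1) = C powr (q-1) * C powr d" by (simp add: d_def flip: powr_add)
    then have "g' C = C powr (q-1) * (K * (2*p - q))" using Cd D by (simp add: g'_def field_simps)
    then show ?thesis using C K qp by simp
  qed
  have g'cont: "isCont g' C" unfolding g'_def using C by (auto intro!: continuous_intros)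
  define \<gamma> where "\<gamma> = g' C / 2"
  have \<gamma>: "\<gamma> > 0" using g'C by (simp add: \<gamma>_def)
  obtain s where s: "s>0" "\<forall>x. x \<noteq> C \<and> norm (x - C) < s \<longrightarrow> norm (g' x - g' C) < \<gamma>"
    using LIM_D[OF g'cont[unfolded isCont_def] \<gamma>] by blast
  define a0 where "a0 = min (s/2) (C/2)"
  have a0: "a0 > 0" "a0 \<le> C/2" "a0 < s" using s C by (auto simp: a0_def)
  have g'_big: "g' x > \<gamma>" if "C - a0 \<le> x" "x \<le> C + a0" for x
  proof (cases "x = C")
    case True then show ?thesis using g'C \<gamma>_def by simp
  next
    case False
    then have "norm (g' x - g' C) < \<gamma>" using s that a0 by auto
    then show ?thesis unfolding \<gamma>_def real_norm_def by linarith
  qed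
  have gl_deriv: "((\<lambda>y. g y - \<gamma> * y) has_real_derivative g' y - \<gamma>) (at y)" if "y > 0" for y
    using DERIV_diff[OF g_deriv[OF that] DERIV_cmult[OF DERIV_ident, of \<gamma>]] by simp
  have g_lower: "\<gamma> * \<bar>x - C\<bar> \<le> \<bar>g x\<bar>" if "C - a0 \<le> x" "x \<le> C + a0" for x
  proof -
    consider "x = C" | "x > C" | "x < C" by linarith
    then show ?thesis
    proof cases
      case 1 then show ?thesis using gC by simp
    next
      case 2
      have "g C - \<gamma> * C < g x - \<gamma> * x"
      proof (rule DERIV_pos_imp_increasing[OF 2])
        fix y assume "C \<le> y" "y \<le> x"
        then show "\<exists>y'. ((\<lambda>y. g y - \<gamma> * y) has_real_derivative y') (at y) \<and> y' > 0"
          using gl_deriv[of y] g'_big[of y] C that a0 by (intro exI[of _ "g' y - \<gamma>"]) auto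
      qed
      then show ?thesis using gC 2 \<gamma> by (simp add: algebra_simps)
    next
      case 3
      have "g x - \<gamma> * x < g C - \<gamma> * C"
      proof (rule DERIV_pos_imp_increasing[OF 3])
        fix y assume "x \<le> y" "y \<le> C"
        then show "\<exists>y'. ((\<lambda>y. g y - \<gamma> * y) has_real_derivative y') (at y) \<and> y' > 0"
          using gl_deriv[of y] g'_big[of y] C that a0 by (intro exI[of _ "g' y - \<gamma>"]) auto
      qed
      then show ?thesis using gC 3 \<gamma> by (simp add: algebra_simps)
    qed
  qed
  have gbound: "\<exists>\<beta>>0. \<forall>x\<in>S. \<beta> \<le> \<bar>g x\<bar>" if S: "compact S" "S \<subseteq> {0<..}" "C \<notin> S" for S
  proof (cases "S = {}")
    case True then show ?thesis by (intro exI[of _ 1]) auto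
  next
    case False
    have "continuous_on S (\<lambda>x. \<bar>g x\<bar>)" using S(2) unfolding g_def
      by (intro continuous_intros) auto
    then obtain x0 where x0: "x0 \<in> S" "\<forall>y\<in>S. \<bar>g x0\<bar> \<le> \<bar>g y\<bar>"
      using continuous_attains_inf[OF S(1) False] by blast
    have "x0 > 0" "x0 \<noteq> C" using x0 S by auto
    then have "g x0 \<noteq> 0" using g_neg g_pos by (metis linorder_neqE_linordered_idom order_less_irrefl)
    then show ?thesis using x0 by (intro exI[of _ "\<bar>g x0\<bar>"]) auto
  qed
  have ev_small: "\<forall>\<^sub>F B in at_top. B > 0 \<and> Mx * B powr (-r) < e0" for Mx
  proof -
    have "((\<lambda>B. Mx * B powr (-r)) \<longlongrightarrow> Mx * 0) at_top"
      by (intro tendsto_mult tendsto_const tendsto_neg_powr filterlim_ident) (use r in auto)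
    then have "\<forall>\<^sub>F B in at_top. Mx * B powr (-r) < e0" using e0 by (auto dest: order_tendstoD(2))
    then show ?thesis using eventually_gt_at_top[of 0] by eventually_elim auto
  qed
  have rescale: "Delta (x * B powr (-r)) B = B powr (-E) * h B x"
    if "B > 0" "x > 0" "x * B powr (-r) < e0" for B x
    using rescale_eq[of q p B x e0 Delta D K R] that qp exp
    by (simp add: r_def h_def g_def eta_def E_def d_def)
  have hypS: "\<forall>\<^sub>F B in at_top. \<forall>x\<in>S. ((eta B) has_real_derivative deta B x) (at x) \<and>
          \<bar>eta B x\<bar> < e \<and> \<bar>deta B x\<bar> < e" if "compact S" "S \<subseteq> {0<..}" "e > 0" for S e
    using hyp that unfolding eta_def by blast
  have h_deriv: "(h B has_real_derivative g' x + deta B x) (at x)"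
    if "x > 0" "((eta B) has_real_derivative deta B x) (at x)" for B x
  proof -
    have "h B = (\<lambda>x. g x + eta B x)" by (rule ext) (simp add: h_def)
    then show ?thesis using DERIV_add[OF g_deriv[OF that(1)] that(2)] by simp
  qed

  define S0 where "S0 = {C-a0..C+a0}"
  have S0: "compact S0" "S0 \<subseteq> {0<..}" using a0 C by (auto simp: S0_def)
  define e1 where "e1 = min \<gamma> (min (- g (C-a0)) (g (C+a0)))"
  have e1: "e1 > 0" using \<gamma> g_neg[of "C-a0"] g_pos[of "C+a0"] a0 C by (simp add: e1_def)
  have core: "\<forall>\<^sub>F B in at_top. B>0 \<and> (C+a0)*B powr(-r) < e0 \<and>
     (\<forall>u v. C-a0 \<le> u \<longrightarrow> u < v \<longrightarrow> v \<le> C+a0 \<longrightarrow> h B u < h B v) \<and>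
     (\<exists>x0. C-a0 \<le> x0 \<and> x0 \<le> C+a0 \<and> h B x0 = 0)"
    using hypS[OF S0 e1] ev_small[of "C+a0"]
  proof eventually_elim
    case (elim B)
    have hd: "\<exists>y'. (h B has_real_derivative y') (at y) \<and> y' > 0" if "C-a0 \<le> y" "y \<le> C+a0" for y
    proof -
      have yS: "y \<in> S0" using that by (simp add: S0_def)
      have "y > 0" using that a0 C by auto
      moreover have "((eta B) has_real_derivative deta B y) (at y)" "\<bar>deta B y\<bar> < e1"
        using elim(1) yS by auto
      moreover have "g' y > \<gamma>" using g'_big that by auto
      moreover have "e1 \<le> \<gamma>" by (simp add: e1_def)
      ultimately show ?thesis by (intro exI[of _ "g' y + deta B y"]) (auto intro: h_deriv)
    qed
    have mono: "h B u < h B v" if "C-a0 \<le> u" "u < v" "v \<le> C+a0" for u v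
      by (rule DERIV_pos_imp_increasing[OF that(2)]) (use hd that in auto)
    have "\<bar>eta B (C-a0)\<bar> < e1" "\<bar>eta B (C+a0)\<bar> < e1" using elim(1) a0 by (auto simp: S0_def)
    then have hl: "h B (C-a0) < 0" and hr: "h B (C+a0) > 0"
      unfolding h_def e1_def by auto
    have "continuous_on {C-a0..C+a0} (h B)"
      by (rule DERIV_atLeastAtMost_imp_continuous_on) (use hd in blast)
    then have "\<exists>x0\<ge>C-a0. x0 \<le> C+a0 \<and> h B x0 = 0"
      using hl hr a0 by (intro IVT') auto
    then show ?case using elim(2) mono by auto
  qed
  have zeros_near: "\<forall>\<^sub>F B in at_top. \<forall>x. m' \<le> x \<and> x \<le> M' \<and> h B x = 0 \<longrightarrow> C - a < x \<and> x < C + a"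
    if "0 < m'" "0 < a" for m' M' a
  proof -
    define S1 where "S1 = {m'..C-a} \<union> {C+a..M'}"
    have S1: "compact S1" "S1 \<subseteq> {0<..}" "C \<notin> S1" using that C by (auto simp: S1_def)
    obtain \<beta> where \<beta>: "\<beta> > 0" "\<forall>x\<in>S1. \<beta> \<le> \<bar>g x\<bar>" using gbound[OF S1] by blast
    show ?thesis using hypS[OF S1(1,2) \<beta>(1)]
    proof eventually_elim
      case (elim B)
      show ?case
      proof (intro allI impI)
        fix x assume x: "m' \<le> x \<and> x \<le> M' \<and> h B x = 0"
        show "C - a < x \<and> x < C + a"
        proof (rule ccontr)
          assume "\<not> (C - a < x \<and> x < C + a)"
          then have "x \<in> S1" using x by (auto simp: S1_def)
          then have "\<bar>eta B x\<bar> < \<beta>" "\<beta> \<le> \<bar>g x\<bar>" using elim \<beta> by auto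
          then have "\<bar>eta B x\<bar> < \<bar>g x\<bar>" by linarith
          moreover have "eta B x = - g x" using x by (simp add: h_def eq_neg_iff_add_eq_0 add.commute)
          ultimately show False by simp
        qed
      qed
    qed
  qed
  define z where "z B = (SOME x. C/2 \<le> x \<and> x \<le> 2*C \<and> h B x = 0)" for B
  have claimZ: "\<forall>\<^sub>F B in at_top. C - a < z B \<and> z B < C + a \<and> h B (z B) = 0" if "0 < a" for a
  proof -
    have C2: "0 < C/2" using C by simp
    show ?thesis using core zeros_near[OF C2 that, of "2*C"]
  proof eventually_elim
    case (elim B)
    then obtain x0 where "C-a0 \<le> x0 \<and> x0 \<le> C+a0 \<and> h B x0 = 0" by blast
    then have "\<exists>x. C/2 \<le> x \<and> x \<le> 2*C \<and> h B x = 0" using a0 by (intro exI[of _ x0]) auto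
    then have "C/2 \<le> z B \<and> z B \<le> 2*C \<and> h B (z B) = 0" unfolding z_def by (rule someI_ex)
    then show ?case using elim by blast
  qed
  qed

  define eps where "eps B = z B * B powr (-r)" for B
  have crossing: "sign_changing_crossing (\<lambda>\<epsilon>. Delta \<epsilon> B) (eps B)"
    if B: "B>0" "(C+a0)*B powr(-r) < e0"
      and mono: "\<forall>u v. C-a0 \<le> u \<longrightarrow> u < v \<longrightarrow> v \<le> C+a0 \<longrightarrow> h B u < h B v"
      and zB: "C - a0 < z B" "z B < C + a0" "h B (z B) = 0" for B
  proof -
    define Bm where "Bm = B powr (-r)"
    have Bm: "Bm > 0" using B by (simp add: Bm_def)
    have BE: "B powr (-E) > 0" using B by simp
    have Dt: "Delta t B = B powr (-E) * h B (t / Bm)" if "t > 0" "t < e0" for t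
    proof -
      have "Delta ((t/Bm) * B powr (-r)) B = B powr (-E) * h B (t / Bm)"
        using that Bm B by (intro rescale) (auto simp: Bm_def)
      then show ?thesis using Bm by (simp add: Bm_def)
    qed
    define \<delta> where "\<delta> = min (z B - (C-a0)) ((C+a0) - z B) * Bm"
    have \<delta>: "\<delta> > 0" using zB Bm by (simp add: \<delta>_def)
    have zpos: "z B > 0" using zB a0 by linarith
    have epsBm: "eps B = z B * Bm" by (simp add: eps_def Bm_def)
    have "Delta (eps B) B = 0"
    proof -
      have "z B * Bm \<le> (C+a0)*Bm" using zB Bm by (intro mult_right_mono) auto
      then have ze: "eps B < e0" using B(2) unfolding eps_def Bm_def by linarith
      have "eps B > 0" using zpos Bm by (simp add: eps_def Bm_def)
      then have "Delta (eps B) B = B powr (-E) * h B (eps B / Bm)"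
        using ze by (intro Dt)
      then show ?thesis using zB Bm by (simp add: eps_def Bm_def)
    qed
    moreover have "Delta t B < 0" if "eps B - \<delta> < t" "t < eps B" for t
    proof -
      have "\<delta> \<le> (z B - (C-a0)) * Bm" using Bm unfolding \<delta>_def by (intro mult_right_mono) auto
      moreover have "(z B - (C-a0)) * Bm = z B * Bm - (C-a0)*Bm" by (simp add: left_diff_distrib)
      ultimately have "(C-a0)*Bm < t" using that(1) unfolding epsBm by linarith
      then have x1a: "C - a0 < t / Bm" using pos_less_divide_eq[OF Bm] by blast
      have "t / Bm < z B" using that(2) pos_divide_less_eq[OF Bm] unfolding epsBm by blast
      note x1 = x1a this
      have "0 < t / Bm" using x1 a0 C by linarith
      then have tpos: "t > 0" using Bm by (simp add: zero_less_divide_iff)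
      have "t < e0"
      proof -
        have "t < z B * Bm" using that by (simp add: eps_def Bm_def)
        also have "\<dots> \<le> (C+a0) * Bm" using zB Bm by (intro mult_right_mono) auto
        finally show ?thesis using B(2) unfolding Bm_def by linarith
      qed
      then have "Delta t B = B powr (-E) * h B (t / Bm)" using tpos by (intro Dt)
      moreover have "h B (t / Bm) < h B (z B)" by (rule mono[rule_format]) (use x1 zB in auto)
      then have "h B (t / Bm) < 0" using zB by simp
      ultimately show ?thesis using BE by (simp add: mult_pos_neg)
    qed
    moreover have "Delta t B > 0" if "eps B < t" "t < eps B + \<delta>" for t
    proof -
      have "\<delta> \<le> ((C+a0) - z B) * Bm" using Bm unfolding \<delta>_def by (intro mult_right_mono) auto
      moreover have "((C+a0) - z B) * Bm = (C+a0)*Bm - z B * Bm" by (simp add: left_diff_distrib)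
      ultimately have "t < (C+a0)*Bm" using that(2) unfolding epsBm by linarith
      then have x1a: "t / Bm < C + a0" using pos_divide_less_eq[OF Bm] by blast
      have "z B < t / Bm" using that(1) pos_less_divide_eq[OF Bm] unfolding epsBm by blast
      note x1 = this x1a
      have "0 < t / Bm" using x1 zpos by linarith
      then have tpos: "t > 0" using Bm by (simp add: zero_less_divide_iff)
      have "t < e0"
      proof -
        have "t < (C+a0) * Bm" using x1 pos_divide_less_eq[OF Bm] by blast
        then show ?thesis using B(2) unfolding Bm_def by linarith
      qed
      then have "Delta t B = B powr (-E) * h B (t / Bm)" using tpos by (intro Dt)
      moreover have "h B (z B) < h B (t / Bm)" by (rule mono[rule_format]) (use x1 zB in auto)
      then have "h B (t / Bm) > 0" using zB by simp
      ultimately show ?thesis using BE by simp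
    qed
    ultimately show ?thesis unfolding sign_changing_crossing_def using \<delta> by blast
  qed

  have main: "(\<forall>m M. 0 < m \<and> m < C \<and> C < M \<longrightarrow>
             (\<forall>\<^sub>F B in at_top.
                eps B \<in> {m * B powr (- r) .. M * B powr (- r)} \<and>
                sign_changing_crossing (\<lambda>\<epsilon>. Delta \<epsilon> B) (eps B) \<and>
                (\<forall>\<epsilon>\<in>{m * B powr (- r) .. M * B powr (- r)}.
                   sign_changing_crossing (\<lambda>t. Delta t B) \<epsilon> \<longrightarrow> \<epsilon> = eps B)))"
  proof (intro allI impI)
    fix m M assume mM: "0 < m \<and> m < C \<and> C < M"
    define a where "a = min a0 (min (C-m) (M-C)) / 2"
    have m0: "0 < m" using mM by simp
    have a1: "a \<le> (C-m)/2" "a \<le> (M-C)/2" "a \<le> a0/2" "0 < a" using mM a0 unfolding a_def by (auto simp: min_def)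
    have a: "0 < a" "a < a0" "C - a > m" "C + a < M" using a1 mM a0 by auto
    show "\<forall>\<^sub>F B in at_top.
                eps B \<in> {m * B powr (- r) .. M * B powr (- r)} \<and>
                sign_changing_crossing (\<lambda>\<epsilon>. Delta \<epsilon> B) (eps B) \<and>
                (\<forall>\<epsilon>\<in>{m * B powr (- r) .. M * B powr (- r)}.
                   sign_changing_crossing (\<lambda>t. Delta t B) \<epsilon> \<longrightarrow> \<epsilon> = eps B)"
      using core claimZ[OF a(1)] zeros_near[OF m0 a(1), of M] ev_small[of M]
    proof eventually_elim
      case (elim B)
      define Bm where "Bm = B powr (-r)"
      have Bm: "Bm > 0" using elim by (simp add: Bm_def)
      have epsBm: "eps B = z B * Bm" by (simp add: eps_def Bm_def)
      have zB: "C - a0 < z B" "z B < C + a0" "h B (z B) = 0" using elim a by auto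
      have mono: "\<forall>u v. C-a0 \<le> u \<longrightarrow> u < v \<longrightarrow> v \<le> C+a0 \<longrightarrow> h B u < h B v" using elim by blast
      have cr: "sign_changing_crossing (\<lambda>\<epsilon>. Delta \<epsilon> B) (eps B)"
        using elim zB by (intro crossing) auto
      have "m * Bm \<le> z B * Bm" "z B * Bm \<le> M * Bm"
        using elim a Bm by (auto intro!: mult_right_mono)
      then have ein: "eps B \<in> {m * B powr (- r) .. M * B powr (- r)}" by (simp add: epsBm Bm_def)
      have uniq: "\<epsilon> = eps B" if eI: "\<epsilon> \<in> {m * B powr (- r) .. M * B powr (- r)}"
        and ec: "sign_changing_crossing (\<lambda>t. Delta t B) \<epsilon>" for \<epsilon>
      proof -
        have D0: "Delta \<epsilon> B = 0" using ec by (simp add: sign_changing_crossing_def)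
        define x where "x = \<epsilon> / Bm"
        have ex: "\<epsilon> = x * Bm" using Bm by (simp add: x_def)
        have xm: "m \<le> x" "x \<le> M" using eI Bm unfolding ex Bm_def[symmetric] by auto
        have "x * Bm \<le> M * Bm" using xm Bm by (intro mult_right_mono) auto
        then have xe: "x * B powr (-r) < e0" using elim unfolding Bm_def by linarith
        have "Delta (x * B powr (-r)) B = B powr (-E) * h B x"
          using elim xm mM xe by (intro rescale) auto
        then have "h B x = 0" using D0 ex elim by (simp add: Bm_def)
        then have "C - a < x" "x < C + a" using elim xm by auto
        have "x = z B"
        proof (rule ccontr)
          assume "x \<noteq> z B"
          then consider "x < z B" | "z B < x" by linarith
          then show False
          proof cases
            case 1
            then have "h B x < h B (z B)" using mono \<open>C - a < x\<close> zB a by (intro mono[rule_format]) auto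
            then show False using \<open>h B x = 0\<close> zB by simp
          next
            case 2
            then have "h B (z B) < h B x" using mono \<open>x < C + a\<close> zB a by (intro mono[rule_format]) auto
            then show False using \<open>h B x = 0\<close> zB by simp
          qed
        qed
        then show ?thesis using ex epsBm by simp
      qed
      show ?case using ein cr uniq by blast
    qed
  qed
  have lim: "((\<lambda>B. eps B / (C * B powr (- r))) \<longlongrightarrow> 1) at_top"
    unfolding tendsto_iff
  proof (intro allI impI)
    fix e :: real assume e: "e > 0"
    define a where "a = C * e"
    have a: "a > 0" using e C by (simp add: a_def)
    show "\<forall>\<^sub>F B in at_top. dist (eps B / (C * B powr (- r))) 1 < e"
      using claimZ[OF a] eventually_gt_at_top[of 0]
    proof eventually_elim
      case (elim B)
      have "B powr (- r) > 0" using elim by simp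
      then have q1: "eps B / (C * B powr (- r)) = z B / C" unfolding eps_def by simp
      have "z B / C - 1 = (z B - C) / C" using C by (simp add: diff_divide_distrib)
      then have q2: "\<bar>z B / C - 1\<bar> = \<bar>z B - C\<bar> / C" using C by (simp add: abs_divide)
      have "\<bar>z B - C\<bar> < e * C" using elim a_def by (auto simp: mult.commute)
      then have q3: "\<bar>z B - C\<bar> / C < e" using C by (simp add: pos_divide_less_eq)
      show ?case unfolding dist_real_def q1 q2 using q3 .
    qed
  qed
  have rate: "(\<lambda>B. eps B / (C * B powr (- r)) - 1) \<in> O[at_top](\<lambda>B. B powr (- \<eta>))"
    if "\<eta> > 0" and H: "\<forall>S. compact S \<and> S \<subseteq> {0<..} \<longrightarrow> (\<exists>A. \<forall>\<^sub>F B in at_top. \<forall>x\<in>S.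
                     \<bar>rescaled_rem R p q B x\<bar> \<le> A * B powr (- \<eta>) \<and> \<bar>deta B x\<bar> \<le> A * B powr (- \<eta>))" for \<eta>
  proof -
    have "compact S0 \<and> S0 \<subseteq> {0<..}" using S0 by blast
    from H[rule_format, OF this] obtain A where A0: "\<forall>\<^sub>F B in at_top. \<forall>x\<in>S0.
                     \<bar>rescaled_rem R p q B x\<bar> \<le> A * B powr (- \<eta>) \<and> \<bar>deta B x\<bar> \<le> A * B powr (- \<eta>)"
      by (elim exE)
    have A: "\<forall>\<^sub>F B in at_top. \<forall>x\<in>S0. \<bar>eta B x\<bar> \<le> A * B powr (- \<eta>)"
      using A0 unfolding eta_def by (rule eventually_mono) blast
    show ?thesis
    proof (rule bigoI[where c = "A / (\<gamma> * C)"])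
      show "\<forall>\<^sub>F B in at_top. norm (eps B / (C * B powr (- r)) - 1) \<le> A / (\<gamma> * C) * norm (B powr (- \<eta>))"
        using A claimZ[OF a0(1)] eventually_gt_at_top[of 0]
      proof eventually_elim
        case (elim B)
        have zS: "z B \<in> S0" using elim by (simp add: S0_def)
        have "g (z B) = - eta B (z B)" using elim by (simp add: h_def)
        then have "\<gamma> * \<bar>z B - C\<bar> \<le> \<bar>eta B (z B)\<bar>"
          using g_lower[of "z B"] elim by auto
        moreover have "\<bar>eta B (z B)\<bar> \<le> A * B powr (- \<eta>)" using elim(1) zS by blast
        ultimately have "\<gamma> * \<bar>z B - C\<bar> \<le> A * B powr (- \<eta>)" by linarith
        have "B powr (- r) > 0" using elim by simp
        then have q1: "eps B / (C * B powr (- r)) = z B / C" unfolding eps_def by simp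
        have "z B / C - 1 = (z B - C) / C" using C by (simp add: diff_divide_distrib)
        then have q2: "\<bar>z B / C - 1\<bar> = \<bar>z B - C\<bar> / C" using C by (simp add: abs_divide)
        have gC: "\<gamma> * C > 0" using C \<gamma> by simp
        have "\<bar>z B - C\<bar> / C = (\<gamma> * \<bar>z B - C\<bar>) / (\<gamma> * C)" using \<gamma> by simp
        also have "\<dots> \<le> (A * B powr (- \<eta>)) / (\<gamma> * C)"
          using gC \<open>\<gamma> * \<bar>z B - C\<bar> \<le> A * B powr (- \<eta>)\<close> by (intro divide_right_mono) auto
        also have "\<dots> = A / (\<gamma> * C) * norm (B powr (- \<eta>))" by simp
        finally show ?case unfolding real_norm_def q1 q2 by simp
      qed
    qed
  qed
  have sgn: "\<forall>\<^sub>F B in at_top. \<forall>x\<in>S.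
             (x < C \<longrightarrow> Delta (x * B powr (- r)) B < 0) \<and>
             (x > C \<longrightarrow> Delta (x * B powr (- r)) B > 0)"
    if S: "compact S" "S \<subseteq> {0<..}" "C \<notin> S" for S
  proof -
    obtain \<beta> where \<beta>: "\<beta> > 0" "\<forall>x\<in>S. \<beta> \<le> \<bar>g x\<bar>" using gbound[OF S] by blast
    obtain Mx where Mx: "\<forall>x\<in>S. \<bar>x\<bar> \<le> Mx" using compact_imp_bounded[OF S(1)] unfolding bounded_real by blast
    show ?thesis using hypS[OF S(1,2) \<beta>(1)] ev_small[of Mx]
    proof eventually_elim
      case (elim B)
      show ?case
      proof
        fix x assume xS: "x \<in> S"
        have x0: "x > 0" using xS S by auto
        have "x * B powr (-r) \<le> Mx * B powr (-r)" using Mx xS elim by (intro mult_right_mono) auto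
        then have "x * B powr (-r) < e0" using elim by linarith
        then have De: "Delta (x * B powr (-r)) B = B powr (-E) * h B x" using elim x0 by (intro rescale) auto
        have "\<bar>eta B x\<bar> < \<beta>" "\<beta> \<le> \<bar>g x\<bar>" using elim xS \<beta> by auto
        moreover have "x < C \<Longrightarrow> g x < 0" "x > C \<Longrightarrow> g x > 0" using g_neg g_pos x0 by auto
        ultimately have "x < C \<Longrightarrow> h B x < 0" "x > C \<Longrightarrow> h B x > 0" unfolding h_def by auto
        then show "(x < C \<longrightarrow> Delta (x * B powr (- r)) B < 0) \<and> (x > C \<longrightarrow> Delta (x * B powr (- r)) B > 0)"
          using De elim by (auto simp: mult_pos_neg)
      qed
    qed
  qed
  have all: "(\<exists>eps_loc :: real \<Rightarrow> real.
          (\<forall>m M. 0 < m \<and> m < C \<and> C < M \<longrightarrow>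
             (\<forall>\<^sub>F B in at_top.
                eps_loc B \<in> {m * B powr (- r) .. M * B powr (- r)} \<and>
                sign_changing_crossing (\<lambda>\<epsilon>. Delta \<epsilon> B) (eps_loc B) \<and>
                (\<forall>\<epsilon>\<in>{m * B powr (- r) .. M * B powr (- r)}.
                   sign_changing_crossing (\<lambda>t. Delta t B) \<epsilon> \<longrightarrow> \<epsilon> = eps_loc B))) \<and>
          ((\<lambda>B. eps_loc B / (C * B powr (- r))) \<longlongrightarrow> 1) at_top \<and>
          (\<forall>\<eta>>0. (\<forall>S. compact S \<and> S \<subseteq> {0<..} \<longrightarrow> (\<exists>A. \<forall>\<^sub>F B in at_top. \<forall>x\<in>S.
                     \<bar>rescaled_rem R p q B x\<bar> \<le> A * B powr (- \<eta>) \<and> \<bar>deta B x\<bar> \<le> A * B powr (- \<eta>)))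
                 \<longrightarrow> (\<lambda>B. eps_loc B / (C * B powr (- r)) - 1) \<in> O[at_top](\<lambda>B. B powr (- \<eta>)))) \<and>
       (\<forall>S. compact S \<and> S \<subseteq> {0<..} \<and> C \<notin> S \<longrightarrow>
          (\<forall>\<^sub>F B in at_top. \<forall>x\<in>S.
             (x < C \<longrightarrow> Delta (x * B powr (- r)) B < 0) \<and>
             (x > C \<longrightarrow> Delta (x * B powr (- r)) B > 0)))"
    using main lim rate sgn by blast
  show ?thesis using all unfolding Let_def C_def r_def .
qed

theorem theorem5:
  fixes Delta R :: "real \<Rightarrow> real \<Rightarrow> real"  \<comment> \<open>arguments: noise strength, shot budget\<close>
    and deta :: "real \<Rightarrow> real \<Rightarrow> real"       \<comment> \<open>x-derivative of the rescaled remainder (case (i))\<close>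
    and D K p q \<delta>b \<delta>v :: real
  assumes D_pos: "D > 0" and K_pos: "K > 0" and p_ge: "p \<ge> 1" and q_nonneg: "q \<ge> 0"
    and expansion: "\<exists>\<epsilon>0>0. \<forall>\<epsilon> B. 0 < \<epsilon> \<and> \<epsilon> < \<epsilon>0 \<and> B > 0 \<longrightarrow>
              Delta \<epsilon> B = D * \<epsilon> powr (2 * p) - K * \<epsilon> powr q / B + R \<epsilon> B"
    and \<delta>b_pos: "\<delta>b > 0" and \<delta>v_pos: "\<delta>v > 0"
    and rem_bound: "\<exists>c \<epsilon>1. \<epsilon>1 > 0 \<and> (\<forall>\<epsilon> B. 0 < \<epsilon> \<and> \<epsilon> < \<epsilon>1 \<and> B > 0 \<longrightarrow>
              \<bar>R \<epsilon> B\<bar> \<le> c * (\<epsilon> powr (2 * p + \<delta>b) + \<epsilon> powr (q + \<delta>v) / B))"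
  shows
    "(q < 2 * p \<and>
      (\<forall>S. compact S \<and> S \<subseteq> {0<..} \<longrightarrow> (\<forall>e>0. \<forall>\<^sub>F B in at_top. \<forall>x\<in>S.
          ((rescaled_rem R p q B) has_real_derivative deta B x) (at x) \<and>
          \<bar>rescaled_rem R p q B x\<bar> < e \<and> \<bar>deta B x\<bar> < e))
      \<longrightarrow>
      (let C = (K / D) powr (1 / (2 * p - q)); r = 1 / (2 * p - q) in
       (\<exists>eps_loc :: real \<Rightarrow> real.
          (\<forall>m M. 0 < m \<and> m < C \<and> C < M \<longrightarrow>
             (\<forall>\<^sub>F B in at_top.
                eps_loc B \<in> {m * B powr (- r) .. M * B powr (- r)} \<and>
                sign_changing_crossing (\<lambda>\<epsilon>. Delta \<epsilon> B) (eps_loc B) \<and>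
                (\<forall>\<epsilon>\<in>{m * B powr (- r) .. M * B powr (- r)}.
                   sign_changing_crossing (\<lambda>t. Delta t B) \<epsilon> \<longrightarrow> \<epsilon> = eps_loc B))) \<and>
          ((\<lambda>B. eps_loc B / (C * B powr (- r))) \<longlongrightarrow> 1) at_top \<and>
          (\<forall>\<eta>>0. (\<forall>S. compact S \<and> S \<subseteq> {0<..} \<longrightarrow> (\<exists>A. \<forall>\<^sub>F B in at_top. \<forall>x\<in>S.
                     \<bar>rescaled_rem R p q B x\<bar> \<le> A * B powr (- \<eta>) \<and> \<bar>deta B x\<bar> \<le> A * B powr (- \<eta>)))
                 \<longrightarrow> (\<lambda>B. eps_loc B / (C * B powr (- r)) - 1) \<in> O[at_top](\<lambda>B. B powr (- \<eta>)))) \<and>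
       (\<forall>S. compact S \<and> S \<subseteq> {0<..} \<and> C \<notin> S \<longrightarrow>
          (\<forall>\<^sub>F B in at_top. \<forall>x\<in>S.
             (x < C \<longrightarrow> Delta (x * B powr (- r)) B < 0) \<and>
             (x > C \<longrightarrow> Delta (x * B powr (- r)) B > 0))))) \<and>
     (q = 2 * p \<longrightarrow>
       (\<forall>B>0. (\<lambda>\<epsilon>. Delta \<epsilon> B - (D - K / B) * \<epsilon> powr (2 * p)) \<in> o[at_right 0](\<lambda>\<epsilon>. \<epsilon> powr (2 * p))) \<and>
       (\<forall>B. B > K / D \<longrightarrow> (\<forall>\<^sub>F \<epsilon> in at_right 0. Delta \<epsilon> B > 0)) \<and>
       (\<forall>B. 0 < B \<and> B < K / D \<longrightarrow> (\<forall>\<^sub>F \<epsilon> in at_right 0. Delta \<epsilon> B < 0))) \<and>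
     (q > 2 * p \<longrightarrow>
       (\<forall>\<^sub>F B in at_top. \<forall>\<^sub>F \<epsilon> in at_right 0. Delta \<epsilon> B > 0))"
proof -
  obtain e0 where e0: "e0 > 0" and ex: "\<forall>\<epsilon> B. 0 < \<epsilon> \<and> \<epsilon> < e0 \<and> B > 0 \<longrightarrow>
              Delta \<epsilon> B = D * \<epsilon> powr (2 * p) - K * \<epsilon> powr q / B + R \<epsilon> B"
    using expansion by blast
  have pos_ev: "\<forall>\<^sub>F e in at_right 0. (e::real) powr (2 * p) > 0"
    by (rule eventually_mono[OF eventually_at_right_less]) simp
  have near: "\<forall>\<^sub>F e in at_right 0. 0 < e \<and> e < e0"
    unfolding eventually_at_right_field using e0 by (intro exI[of _ e0]) auto
  have P2: "\<forall>B>0. (\<lambda>\<epsilon>. Delta \<epsilon> B - (D - K / B) * \<epsilon> powr (2 * p)) \<in> o[at_right 0](\<lambda>\<epsilon>. \<epsilon> powr (2 * p))"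
    if q2: "q = 2 * p"
  proof (intro allI impI)
    fix B :: real assume B: "B > 0"
    have eq: "\<forall>\<^sub>F e in at_right 0. Delta e B - (D - K / B) * e powr (2 * p) = R e B"
      using near
    proof eventually_elim
      case (elim e)
      then have "Delta e B = D * e powr (2 * p) - K * e powr q / B + R e B" using ex B by blast
      then show ?case using q2 by (simp add: algebra_simps)
    qed
    have RR: "(\<lambda>e. R e B) \<in> o[at_right 0](\<lambda>e. e powr (2 * p))"
      using rem_smallo[OF B _ \<delta>b_pos \<delta>v_pos rem_bound] q2 by simp
    show "(\<lambda>\<epsilon>. Delta \<epsilon> B - (D - K / B) * \<epsilon> powr (2 * p)) \<in> o[at_right 0](\<lambda>\<epsilon>. \<epsilon> powr (2 * p))"
      using landau_o.small.in_cong[OF eq] RR by simp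
  qed
  have part2: "q = 2 * p \<longrightarrow>
       (\<forall>B>0. (\<lambda>\<epsilon>. Delta \<epsilon> B - (D - K / B) * \<epsilon> powr (2 * p)) \<in> o[at_right 0](\<lambda>\<epsilon>. \<epsilon> powr (2 * p))) \<and>
       (\<forall>B. B > K / D \<longrightarrow> (\<forall>\<^sub>F \<epsilon> in at_right 0. Delta \<epsilon> B > 0)) \<and>
       (\<forall>B. 0 < B \<and> B < K / D \<longrightarrow> (\<forall>\<^sub>F \<epsilon> in at_right 0. Delta \<epsilon> B < 0))"
  proof (rule impI, intro conjI)
    assume q2: "q = 2 * p"
    note P = P2[OF q2]
    show "\<forall>B>0. (\<lambda>\<epsilon>. Delta \<epsilon> B - (D - K / B) * \<epsilon> powr (2 * p)) \<in> o[at_right 0](\<lambda>\<epsilon>. \<epsilon> powr (2 * p))"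
      by (rule P)
    show "\<forall>B. B > K / D \<longrightarrow> (\<forall>\<^sub>F \<epsilon> in at_right 0. Delta \<epsilon> B > 0)"
    proof (intro allI impI)
      fix B :: real assume B: "B > K / D"
      have KD: "K / D > 0" using K_pos D_pos by simp
      then have B0: "B > 0" using B by linarith
      have "K < D * B" using B D_pos by (simp add: field_simps)
      then have L: "D - K / B > 0" using B0 by (simp add: field_simps)
      show "\<forall>\<^sub>F \<epsilon> in at_right 0. Delta \<epsilon> B > 0"
        by (rule sign_pos_from_smallo[OF P[rule_format, OF B0] L pos_ev])
    qed
    show "\<forall>B. 0 < B \<and> B < K / D \<longrightarrow> (\<forall>\<^sub>F \<epsilon> in at_right 0. Delta \<epsilon> B < 0)"
    proof (intro allI impI)
      fix B :: real assume B: "0 < B \<and> B < K / D"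
      then have "D * B < K" using D_pos by (simp add: field_simps)
      then have L: "D - K / B < 0" using B by (simp add: field_simps)
      have B0: "B > 0" using B by simp
      show "\<forall>\<^sub>F \<epsilon> in at_right 0. Delta \<epsilon> B < 0"
        by (rule sign_neg_from_smallo[OF P[rule_format, OF B0] L pos_ev])
    qed
  qed
  have part3: "q > 2 * p \<longrightarrow> (\<forall>\<^sub>F B in at_top. \<forall>\<^sub>F \<epsilon> in at_right 0. Delta \<epsilon> B > 0)"
  proof
    assume q3: "q > 2 * p"
    have posB: "\<forall>\<^sub>F \<epsilon> in at_right 0. Delta \<epsilon> B > 0" if B: "B > 0" for B
    proof -
      have eq: "\<forall>\<^sub>F e in at_right 0. Delta e B - D * e powr (2 * p) = R e B - K / B * e powr q"
        using near
      proof eventually_elim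
        case (elim e)
        then have "Delta e B = D * e powr (2 * p) - K * e powr q / B + R e B" using ex B by blast
        then show ?case by (simp add: algebra_simps)
      qed
      have RR: "(\<lambda>e. R e B - K / B * e powr q) \<in> o[at_right 0](\<lambda>e. e powr (2 * p))"
      proof (rule sum_in_smallo(2))
        show "(\<lambda>e. R e B) \<in> o[at_right 0](\<lambda>e. e powr (2 * p))"
          using rem_smallo[OF B _ \<delta>b_pos \<delta>v_pos rem_bound] q3 by simp
        show "(\<lambda>e. K / B * e powr q) \<in> o[at_right 0](\<lambda>e. e powr (2 * p))"
          using K_pos B q3 by (simp add: powr_smallo_at0)
      qed
      have "(\<lambda>e. Delta e B - D * e powr (2 * p)) \<in> o[at_right 0](\<lambda>e. e powr (2 * p))"
        using landau_o.small.in_cong[OF eq] RR by simp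
      then show ?thesis by (rule sign_pos_from_smallo[OF _ D_pos pos_ev])
    qed
    show "\<forall>\<^sub>F B in at_top. \<forall>\<^sub>F \<epsilon> in at_right 0. Delta \<epsilon> B > 0"
      by (rule eventually_mono[OF eventually_gt_at_top[of 0] posB])
  qed
  show ?thesis
    apply (intro conjI)
    subgoal by (intro impI, elim conjE, rule case_i[OF D_pos K_pos q_nonneg _ e0 ex]) assumption+
    subgoal by (rule part2)
    subgoal by (rule part3)
    done
qed

end
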